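(* Let $(M^n,g,k)$ be an initial data set with $M$ spin, let $\phi\in\overline{\mathcal S}(M)$ and $p\in M$. If $N(\phi)=|X(\phi)|$ at $p$, or if $N(\phi)=|Y(\phi)|$ at $p$, then at $p$: $$N(\phi)\,\omega(\phi)=X(\phi)\wedge Y(\phi),\qquad X(\phi)\perp Y(\phi),\qquad N(\phi)^2-|X(\phi)|^2-|Y(\phi)|^2+\tfrac12|\omega(\phi)|^2=0 .$$
   Context: Spinor conventions. For a Riemannian spin manifold $(M^n,g)$, $\mathcal S$ is the complex spinor bundle with Hermitian inner product $\langle\cdot,\cdot\rangle$ (complex linear in the first slot); Clifford multiplication by tangent vectors satisfies $vw+wv=-2g(v,w)$ and vectors act skew-Hermitian. Set $\overline{\mathcal S}=\mathcal S\oplus\mathcal S$ with direct-sum inner product, where a tangent vector $e_l$ and an extra element $e_0$ act by $e_l(\psi_1,\psi_2)=(e_l\psi_1,-e_l\psi_2)$, $e_0(\psi_1,\psi_2)=(\psi_2,\psi_1)$. With $\{e_i\}_{i=1}^n$ an orthonormal frame and summation over repeated indices, for $\phi\in\overline{\mathcal S}$: $N(\phi)=|\phi|^2$, $X(\phi)=\langle e_ie_0\phi,\phi\rangle e_i$, $Y(\phi)=\langle\mathbf i e_i\phi,\phi\rangle e_i$, $\omega_{ij}(\phi)=\operatorname{Im}\langle e_ie_je_0\phi,\phi\rangle$; these are real. For vectors $V,W$, $(V\wedge W)_{ij}=V_iW_j-V_jW_i$, and $|\omega|^2=\sum_{i,j}\omega_{ij}^2$. *)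

theory Defs
  imports "HOL-Analysis.Analysis"
begin

text \<open>At the point p we fix an orthonormal frame e_1..e_n of T_pM,
 indexed by the finite type 'n (so n = CARD('n)). The spinor fibre S_p is modelled as
 complex^'m with the standard Hermitian product (complex linear in the first slot), and
 Clifford multiplication by e_i is the complex matrix E i.\<close>

definition herm :: "complex^'m \<Rightarrow> complex^'m \<Rightarrow> complex" where
  "herm u v = (\<Sum>k\<in>UNIV. u$k * cnj (v$k))"

text \<open>E is (Clifford multiplication on) the complex spinor module of Cl(n):
 Clifford relations, skew-Hermitian action, and complex dimension 2^(n div 2)
 (which forces it to be an irreducible spinor representation).\<close>
definition spinor_module :: "('n::finite \<Rightarrow> complex^'m::finite^'m) \<Rightarrow> bool" where
  "spinor_module E \<longleftrightarrow>
     (\<forall>i j. E i ** E j + E j ** E i = mat (if i = j then -2 else 0)) \<and>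
     (\<forall>i u v. herm (E i *v u) v = - herm u (E i *v v)) \<and>
     CARD('m) = 2 ^ (CARD('n) div 2)"

type_synonym 'm sbar = "(complex^'m) \<times> (complex^'m)"

definition hermb :: "'m::finite sbar \<Rightarrow> 'm sbar \<Rightarrow> complex" where
  "hermb \<phi> \<psi> = herm (fst \<phi>) (fst \<psi>) + herm (snd \<phi>) (snd \<psi>)"

definition cliff :: "('n \<Rightarrow> complex^'m::finite^'m) \<Rightarrow> 'n \<Rightarrow> 'm sbar \<Rightarrow> 'm sbar" where
  "cliff E i \<phi> = (E i *v fst \<phi>, - (E i *v snd \<phi>))"

definition e0 :: "'m::finite sbar \<Rightarrow> 'm sbar" where
  "e0 \<phi> = (snd \<phi>, fst \<phi>)"

definition imul :: "'m::finite sbar \<Rightarrow> 'm sbar" where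
  "imul \<phi> = (\<i> *s fst \<phi>, \<i> *s snd \<phi>)"

definition Nf :: "'m::finite sbar \<Rightarrow> real" where
  "Nf \<phi> = Re (hermb \<phi> \<phi>)"

definition Xf :: "('n::finite \<Rightarrow> complex^'m::finite^'m) \<Rightarrow> 'm sbar \<Rightarrow> real^'n" where
  "Xf E \<phi> = (\<chi> i. Re (hermb (cliff E i (e0 \<phi>)) \<phi>))"

definition Yf :: "('n::finite \<Rightarrow> complex^'m::finite^'m) \<Rightarrow> 'm sbar \<Rightarrow> real^'n" where
  "Yf E \<phi> = (\<chi> i. Re (hermb (imul (cliff E i \<phi>)) \<phi>))"

definition omega :: "('n::finite \<Rightarrow> complex^'m::finite^'m) \<Rightarrow> 'm sbar \<Rightarrow> 'n \<Rightarrow> 'n \<Rightarrow> real" where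
  "omega E \<phi> i j = Im (hermb (cliff E i (cliff E j (e0 \<phi>))) \<phi>)"

definition wedge :: "real^'n::finite \<Rightarrow> real^'n \<Rightarrow> 'n \<Rightarrow> 'n \<Rightarrow> real" where
  "wedge V W i j = V$i * W$j - V$j * W$i"

definition form_norm2 :: "('n::finite \<Rightarrow> 'n \<Rightarrow> real) \<Rightarrow> real" where
  "form_norm2 w = (\<Sum>i\<in>UNIV. \<Sum>j\<in>UNIV. (w i j)^2)"

end

theory Submission
  imports Defs
begin

lemma wedge_sq:
  fixes v y :: "real^'n::finite"
  shows "(\<Sum>i\<in>UNIV. \<Sum>j\<in>UNIV. (v$i*y$j - v$j*y$i)^2) = 2*((v\<bullet>v)*(y\<bullet>y)) - 2*(v\<bullet>y)^2"
proof -
  have e: "\<And>i j. (v$i*y$j - v$j*y$i)^2 = (v$i * v$i)*(y$j*y$j) + (v$j * v$j)*(y$i*y$i) - 2*((v$i*y$i)*(v$j*y$j))"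
    by (simp add: power2_eq_square algebra_simps)
  have s1: "(\<Sum>i\<in>UNIV. \<Sum>j\<in>UNIV. (v$i * v$i)*(y$j*y$j)) = (v\<bullet>v)*(y\<bullet>y)"
    by (simp add: inner_vec_def sum_product)
  have s2: "(\<Sum>i\<in>UNIV. \<Sum>j\<in>UNIV. (v$j * v$j)*(y$i*y$i)) = (v\<bullet>v)*(y\<bullet>y)"
    by (subst sum.swap) (simp add: inner_vec_def sum_product)
  have s3: "(\<Sum>i\<in>UNIV. \<Sum>j\<in>UNIV. 2*((v$i*y$i)*(v$j*y$j))) = 2*(v\<bullet>y)^2"
    by (simp add: inner_vec_def sum_product power2_eq_square sum_distrib_left[symmetric] mult.assoc)
  show ?thesis
    unfolding e sum_subtractf sum.distrib s1 s2 s3 by simp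
qed

lemma caseA:
  fixes N :: real and v y X Y :: "real^'n::finite" and w :: "'n \<Rightarrow> 'n \<Rightarrow> real"
  assumes vv: "v \<bullet> v = 1" and X: "X = N *\<^sub>R v" and Y: "Y = (-2) *\<^sub>R y + (2*(v\<bullet>y)) *\<^sub>R v"
    and w: "\<And>i j. w i j = -2*(v$i*y$j - v$j*y$i)"
  shows "(\<forall>i j. N * w i j = wedge X Y i j) \<and> X \<bullet> Y = 0
    \<and> N^2 - (norm X)^2 - (norm Y)^2 + 1/2 * form_norm2 w = 0"
proof (intro conjI allI)
  fix i j
  show "N * w i j = wedge X Y i j"
    by (simp add: w X Y wedge_def algebra_simps)
next
  show "X \<bullet> Y = 0"
    using vv by (simp add: X Y inner_add_right inner_commute algebra_simps)
next
  have f: "form_norm2 w = 4 * (\<Sum>i\<in>UNIV. \<Sum>j\<in>UNIV. (v$i*y$j - v$j*y$i)^2)"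
    unfolding form_norm2_def w sum_distrib_left by (intro sum.cong refl) (simp add: power2_eq_square algebra_simps)
  have nX: "(norm X)^2 = N^2" unfolding power2_norm_eq_inner X inner_scaleR_left inner_scaleR_right vv by (simp add: power2_eq_square)
  have nY: "(norm Y)^2 = 4*(y\<bullet>y) - 4*(v\<bullet>y)^2"
    unfolding power2_norm_eq_inner using vv by (simp add: Y inner_add_left inner_diff_left inner_diff_right inner_add_right inner_commute power2_eq_square algebra_simps)
  show "N^2 - (norm X)^2 - (norm Y)^2 + 1/2 * form_norm2 w = 0"
    unfolding f nX nY wedge_sq vv by (simp add: field_simps)
qed

lemma caseB:
  fixes N :: real and v X Y :: "real^'n::finite" and w :: "'n \<Rightarrow> 'n \<Rightarrow> real"
  assumes vv: "v \<bullet> v = 1" and Y: "Y = N *\<^sub>R v" and Xv: "X \<bullet> v = 0"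
    and w: "\<And>i j. w i j = - (v$i*X$j - v$j*X$i)"
  shows "(\<forall>i j. N * w i j = wedge X Y i j) \<and> X \<bullet> Y = 0
    \<and> N^2 - (norm X)^2 - (norm Y)^2 + 1/2 * form_norm2 w = 0"
proof (intro conjI allI)
  fix i j
  show "N * w i j = wedge X Y i j"
    by (simp add: w Y wedge_def algebra_simps)
next
  show "X \<bullet> Y = 0"
    using Xv by (simp add: Y)
next
  have f: "form_norm2 w = (\<Sum>i\<in>UNIV. \<Sum>j\<in>UNIV. (v$i*X$j - v$j*X$i)^2)"
    unfolding form_norm2_def w by (intro sum.cong refl) (simp add: power2_commute)
  have nY: "(norm Y)^2 = N^2" unfolding power2_norm_eq_inner Y inner_scaleR_left inner_scaleR_right vv by (simp add: power2_eq_square)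
  have nX: "(norm X)^2 = X \<bullet> X" by (simp add: power2_norm_eq_inner)
  show "N^2 - (norm X)^2 - (norm Y)^2 + 1/2 * form_norm2 w = 0"
    unfolding f nX nY wedge_sq vv using Xv by (simp add: inner_commute)
qed



lemma mv_smult: "(A::complex^'m::finite^'k::finite) *v (c *s x) = c *s (A *v x)"
  by (simp add: vec_eq_iff matrix_vector_mult_def sum_distrib_left algebra_simps)

lemma mv_neg: "(A::complex^'m::finite^'k::finite) *v (- x) = - (A *v x)"
  by (simp add: vec_eq_iff matrix_vector_mult_def sum_negf)

lemma mv_sum: "(A::complex^'m::finite^'k::finite) *v (\<Sum>k\<in>S. f k) = (\<Sum>k\<in>S. A *v f k)"
  by (simp add: vec_eq_iff matrix_vector_mult_def sum_distrib_left sum_component; subst sum.swap; simp)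

lemma mv_addm: "((A::complex^'m::finite^'k::finite) + B) *v x = A *v x + B *v x"
  by (simp add: vec_eq_iff matrix_vector_mult_def algebra_simps sum.distrib)

lemma mv_mat: "mat c *v (x::complex^'m::finite) = c *s x"
  by (simp add: vec_eq_iff matrix_vector_mult_def mat_def if_distrib if_distribR cong del: if_weak_cong)

lemma herm_add_l: "herm (x + y) w = herm x w + herm y w"
  by (simp add: herm_def algebra_simps sum.distrib)
lemma herm_add_r: "herm w (x + y) = herm w x + herm w y"
  by (simp add: herm_def algebra_simps sum.distrib)
lemma herm_diff_l: "herm (x - y) w = herm x w - herm y w"
  by (simp add: herm_def algebra_simps sum_subtractf)
lemma herm_diff_r: "herm w (x - y) = herm w x - herm w y"
  by (simp add: herm_def algebra_simps sum_subtractf)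
lemma herm_neg_l: "herm (- x) w = - herm x w"
  by (simp add: herm_def sum_negf)
lemma herm_neg_r: "herm w (- x) = - herm w x"
  by (simp add: herm_def sum_negf)
lemma herm_sm_l: "herm (c *s x) w = c * herm x w"
  by (simp add: herm_def sum_distrib_left algebra_simps)
lemma herm_sm_r: "herm w (c *s x) = cnj c * herm w x"
  by (simp add: herm_def sum_distrib_left algebra_simps)
lemma herm_sum_l: "herm (\<Sum>k\<in>S. f k) w = (\<Sum>k\<in>S. herm (f k) w)"
  by (simp add: herm_def sum_distrib_right; subst sum.swap; simp)
lemma herm_sum_r: "herm w (\<Sum>k\<in>S. f k) = (\<Sum>k\<in>S. herm w (f k))"
  by (simp add: herm_def sum_distrib_left; subst sum.swap; simp)
lemma herm_cnj: "cnj (herm x w) = herm w x"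
  by (simp add: herm_def mult.commute)
lemma herm_self: "herm x x = of_real (\<Sum>k\<in>UNIV. (cmod (x$k))^2)"
proof -
  have "herm x x = (\<Sum>k\<in>UNIV. of_real ((cmod (x$k))^2))"
    unfolding herm_def by (rule sum.cong) (auto simp: complex_norm_square[symmetric])
  then show ?thesis by simp
qed
lemma herm_self_ge: "Re (herm x x) \<ge> 0"
  by (simp add: herm_self sum_nonneg)
lemma herm_self_Im: "Im (herm x x) = 0"
  by (simp add: herm_self)
lemma herm_self_0: "Re (herm x x) = 0 \<Longrightarrow> x = 0"
proof -
  assume "Re (herm x x) = 0"
  then have "(\<Sum>k\<in>UNIV. (cmod (x$k))^2) = 0" by (simp add: herm_self)
  then have "\<forall>k\<in>UNIV. (cmod (x$k))^2 = 0" by (subst (asm) sum_nonneg_eq_0_iff) auto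
  then show "x = 0" by (simp add: vec_eq_iff)
qed
lemma herm_0_l[simp]: "herm 0 w = 0" by (simp add: herm_def)
lemma herm_0_r[simp]: "herm w 0 = 0" by (simp add: herm_def)


lemma sm_sum: "(c::complex) *s (\<Sum>k\<in>S. f k) = (\<Sum>k\<in>S. c *s f k)"
  by (simp add: vec_eq_iff sum_distrib_left)

lemma sum_sq_aux: "(\<Sum>k\<in>UNIV. complex_of_real (v$k) * (2 * complex_of_real (v$k)) * z) = 2 * complex_of_real (v \<bullet> (v::real^'n::finite)) * z"
proof -
  have "(\<Sum>k\<in>UNIV. complex_of_real (v$k) * (2 * complex_of_real (v$k)) * z) = (\<Sum>k\<in>UNIV. complex_of_real (v$k * v$k) * (2 * z))"
    by (rule sum.cong) (simp_all add: mult_ac)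
  also have "\<dots> = complex_of_real (\<Sum>k\<in>UNIV. v$k * v$k) * (2 * z)"
    by (simp only: sum_distrib_right[symmetric] of_real_sum)
  finally show ?thesis by (simp add: inner_vec_def)
qed

lemma half_aux: fixes x y :: "'a::ab_group_add" assumes "x = -x - y" shows "x + x = -y"
proof -
  have "x + x = (-x - y) + x" using assms by (rule arg_cong)
  then show ?thesis by simp
qed

lemma half2: "(a::complex) + a = -(2*b) \<Longrightarrow> a = -b"
  by (simp add: mult_2[symmetric])

lemma Nf_eq: "Nf \<phi> = Re (herm (fst \<phi>) (fst \<phi>)) + Re (herm (snd \<phi>) (snd \<phi>))"
  by (simp add: Nf_def hermb_def)
lemma Xf_eq: "Xf E \<phi> $ k = Re (herm (E k *v snd \<phi>) (fst \<phi>)) - Re (herm (E k *v fst \<phi>) (snd \<phi>))"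
  by (simp add: Xf_def hermb_def cliff_def e0_def herm_neg_l)
lemma Yf_eq: "Yf E \<phi> $ k = Re (\<i> * herm (E k *v fst \<phi>) (fst \<phi>)) - Re (\<i> * herm (E k *v snd \<phi>) (snd \<phi>))"
  by (simp add: Yf_def hermb_def cliff_def imul_def herm_sm_l herm_neg_l vector_smult_rneg)
lemma om_eq: "omega E \<phi> i j = Im (herm (E i *v (E j *v snd \<phi>)) (fst \<phi>) + herm (E i *v (E j *v fst \<phi>)) (snd \<phi>))"
  by (simp add: omega_def hermb_def cliff_def e0_def mv_neg herm_neg_l)

lemma solve1: "\<i> * (z::complex) = - \<i> * z + r \<Longrightarrow> z = - \<i> * r / 2"
proof -
  assume h: "\<i> * z = - \<i> * z + r"
  have "2 * \<i> * z = r" using h by (simp add: algebra_simps)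
  then have "- \<i> * (2 * \<i> * z) = - \<i> * r" by simp
  then have "2 * z = - \<i> * r" by (simp add: algebra_simps)
  then show ?thesis by (simp add: field_simps)
qed

lemma solve2: "- \<i> * (w::complex) = \<i> * w + r \<Longrightarrow> w = \<i> * r / 2"
proof -
  assume h: "- \<i> * w = \<i> * w + r"
  have "r = - \<i> * w - \<i> * w" using h by (metis add_diff_cancel_left')
  then have "r = - 2 * \<i> * w" by simp
  then have "\<i> * r = \<i> * (- 2 * \<i> * w)" by simp
  then have "\<i> * r = 2 * w" by (simp add: algebra_simps)
  then show ?thesis by (simp add: field_simps)
qed

locale spin =
  fixes E :: "'n::finite \<Rightarrow> complex^'m::finite^'m"
  assumes cl: "\<And>i j u. E i *v (E j *v u) + E j *v (E i *v u) = (if i = j then -2 else 0) *s u"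
    and sk: "\<And>i u w. herm (E i *v u) w = - herm u (E i *v w)"
begin

definition V :: "real^'n \<Rightarrow> complex^'m \<Rightarrow> complex^'m" where
  "V v u = (\<Sum>k\<in>UNIV. complex_of_real (v$k) *s (E k *v u))"

lemma V_add: "V v (x + y) = V v x + V v y"
  by (simp add: V_def matrix_vector_right_distrib vector_add_ldistrib sum.distrib)
lemma V_sm: "V v (c *s x) = c *s V v x"
  by (simp add: V_def mv_smult sm_sum vector_smult_assoc mult.commute)
lemma V_neg: "V v (- x) = - V v x"
  by (simp add: V_def mv_neg vector_smult_rneg sum_negf)
lemma V_sum: "V v (\<Sum>k\<in>S. f k) = (\<Sum>k\<in>S. V v (f k))"
  unfolding V_def by (simp add: mv_sum sm_sum; subst sum.swap; simp)

lemma herm_V_l: "herm (V v x) w = (\<Sum>k\<in>UNIV. complex_of_real (v$k) * herm (E k *v x) w)"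
  by (simp add: V_def herm_sum_l herm_sm_l)

lemma V_skew: "herm (V v x) w = - herm x (V v w)"
  unfolding herm_V_l by (simp add: V_def herm_sum_r herm_sm_r sk sum_negf)


lemma V_anti: "V v (E i *v u) + E i *v (V v u) = (-2 * complex_of_real (v$i)) *s u"
proof -
  have "V v (E i *v u) + E i *v (V v u)
     = (\<Sum>k\<in>UNIV. complex_of_real (v$k) *s (E k *v (E i *v u) + E i *v (E k *v u)))"
    unfolding V_def mv_sum mv_smult vector_add_ldistrib sum.distrib by simp
  also have "\<dots> = (\<Sum>k\<in>UNIV. complex_of_real (v$k) *s ((if k = i then -2 else 0) *s u))"
    by (simp only: cl)
  also have "\<dots> = (\<Sum>k\<in>UNIV. (if k = i then (-2 * complex_of_real (v$i)) *s u else 0))"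
    by (rule sum.cong) (auto simp: vector_smult_assoc mult.commute)
  also have "\<dots> = (-2 * complex_of_real (v$i)) *s u"
    by simp
  finally show ?thesis .
qed

lemma E_V: "E i *v (V v u) = - V v (E i *v u) - (2 * complex_of_real (v$i)) *s u"
proof -
  have h: "\<And>k. (V v (E i *v u))$k + (E i *v V v u)$k = -2 * complex_of_real (v$i) * u$k"
    using V_anti[of v i u] by (simp add: vec_eq_iff)
  show ?thesis unfolding vec_eq_iff
  proof
    fix k
    have "(E i *v V v u)$k = -2 * complex_of_real (v$i) * u$k - (V v (E i *v u))$k"
      using h[of k] by (simp add: eq_diff_eq add.commute)
    then show "(E i *v V v u)$k = (- V v (E i *v u) - (2 * complex_of_real (v$i)) *s u)$k"
      by simp
  qed
qed

lemma V_sq: "V v (V v u) = - complex_of_real (v \<bullet> v) *s u"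
proof -
  have "V v (V v u) = (\<Sum>k\<in>UNIV. complex_of_real (v$k) *s V v (E k *v u))"
    by (subst (2) V_def) (simp only: V_sum V_sm)
  also have "\<dots> = (\<Sum>k\<in>UNIV. complex_of_real (v$k) *s (- (E k *v V v u) - (2 * complex_of_real (v$k)) *s u))"
  proof (rule sum.cong)
    fix k
    have "V v (E k *v u) = - (E k *v V v u) - (2 * complex_of_real (v$k)) *s u"
      by (simp add: E_V)
    then show "complex_of_real (v$k) *s V v (E k *v u) = complex_of_real (v$k) *s (- (E k *v V v u) - (2 * complex_of_real (v$k)) *s u)"
      by simp
  qed simp
  also have "\<dots> = - V v (V v u) - (2 * complex_of_real (v \<bullet> v)) *s u"
  proof -
    show ?thesis unfolding vec_eq_iff
    proof
      fix j
      have "(\<Sum>k\<in>UNIV. complex_of_real (v$k) *s (- (E k *v V v u) - (2 * complex_of_real (v$k)) *s u)) $ j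
        = (\<Sum>k\<in>UNIV. - (complex_of_real (v$k) * (E k *v V v u)$j) - complex_of_real (v$k) * (2 * complex_of_real (v$k)) * u$j)"
        by (simp only: sum_component vector_smult_component vector_minus_component vector_uminus_component
            right_diff_distrib mult_minus_right mult.assoc)
      also have "\<dots> = - (\<Sum>k\<in>UNIV. complex_of_real (v$k) * (E k *v V v u)$j) - 2 * complex_of_real (v \<bullet> v) * u$j"
        by (simp only: sum_subtractf sum_negf sum_sq_aux)
      also have "\<dots> = (- V v (V v u) - (2 * complex_of_real (v \<bullet> v)) *s u) $ j"
        by (simp only: V_def sum_component vector_smult_component vector_minus_component vector_uminus_component)
      finally show "(\<Sum>k\<in>UNIV. complex_of_real (v$k) *s (- (E k *v V v u) - (2 * complex_of_real (v$k)) *s u)) $ j = (- V v (V v u) - (2 * complex_of_real (v \<bullet> v)) *s u) $ j" .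
    qed
  qed
  finally have "V v (V v u) = - V v (V v u) - (2 * complex_of_real (v \<bullet> v)) *s u" .
  then have eq: "V v (V v u) + V v (V v u) = - ((2 * complex_of_real (v \<bullet> v)) *s u)"
    by (rule half_aux)
  have "\<And>k. (V v (V v u))$k = - (complex_of_real (v \<bullet> v) * u$k)"
  proof -
    fix k
    have "(V v (V v u) + V v (V v u))$k = (- ((2 * complex_of_real (v \<bullet> v)) *s u))$k"
      using eq by (rule arg_cong)
    then have "(V v (V v u))$k + (V v (V v u))$k = - (2 * (complex_of_real (v \<bullet> v) * u$k))"
      by (simp only: vector_add_component vector_uminus_component vector_smult_component mult.assoc)
    then show "(V v (V v u))$k = - (complex_of_real (v \<bullet> v) * u$k)"
      by (rule half2)
  qed
  then show ?thesis by (simp add: vec_eq_iff)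
qed

lemma herm_VV: "herm (V v x) (V v x) = complex_of_real (v \<bullet> v) * herm x x"
  by (simp add: V_skew V_sq herm_sm_r herm_neg_r)

lemma herm_r_V: "herm x (V v w) = - herm (V v x) w"
  by (simp add: V_skew)

lemma V_E: "V v (E i *v u) = - (E i *v V v u) - (2 * complex_of_real (v$i)) *s u"
  by (simp add: E_V)

lemma K1: "E i *v (E j *v (V v u)) = V v (E i *v (E j *v u)) + (2 * complex_of_real (v$i)) *s (E j *v u)
    - (2 * complex_of_real (v$j)) *s (E i *v u)"
  by (simp add: E_V matrix_vector_mult_diff_distrib mv_neg mv_smult algebra_simps)

abbreviation conclS where "conclS \<phi> \<equiv> (\<forall>i j. Nf \<phi> * omega E \<phi> i j = wedge (Xf E \<phi>) (Yf E \<phi>) i j)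
    \<and> Xf E \<phi> \<bullet> Yf E \<phi> = 0
    \<and> (Nf \<phi>)^2 - (norm (Xf E \<phi>))^2 - (norm (Yf E \<phi>))^2 + 1/2 * form_norm2 (omega E \<phi>) = 0"

lemma zero_case: assumes "Nf \<phi> = 0" shows "conclS \<phi>"
proof -
  have "Re (herm (fst \<phi>) (fst \<phi>)) = 0" "Re (herm (snd \<phi>) (snd \<phi>)) = 0"
    using assms herm_self_ge[of "fst \<phi>"] herm_self_ge[of "snd \<phi>"] by (auto simp: Nf_eq)
  then have "fst \<phi> = 0" "snd \<phi> = 0" by (auto intro: herm_self_0)
  then have p: "\<phi> = (0, 0)" by (simp add: prod_eq_iff)
  have "Xf E \<phi> = 0" "Yf E \<phi> = 0" "omega E \<phi> = (\<lambda>i j. 0)"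
    unfolding p by (simp_all add: vec_eq_iff Xf_eq Yf_eq om_eq fun_eq_iff)
  then show ?thesis using assms by (simp add: wedge_def form_norm2_def)
qed

lemma caseX: assumes NX: "Nf \<phi> = norm (Xf E \<phi>)" and N0: "Nf \<phi> \<noteq> 0" shows "conclS \<phi>"
proof -
  obtain a b where p: "\<phi> = (a, b)" by (cases \<phi>)
  define N where "N = Nf \<phi>"
  define X where "X = Xf E \<phi>"
  define v where "v = (1/N) *\<^sub>R X"
  have Npos: "N > 0" using NX N0 norm_ge_zero[of X] unfolding N_def X_def by linarith
  have Xv: "X = N *\<^sub>R v" using Npos by (simp add: v_def)
  have XX: "X \<bullet> X = N^2" using NX by (simp add: N_def X_def power2_norm_eq_inner[symmetric])
  have vv: "v \<bullet> v = 1" using Npos XX by (simp add: v_def power2_eq_square)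
  have Xk: "X$k = 2 * Re (herm (E k *v b) a)" for k
  proof -
    have "herm (E k *v a) b = - cnj (herm (E k *v b) a)" by (simp add: sk herm_cnj)
    then show ?thesis by (simp add: X_def Xf_eq p)
  qed
  have "2 * Re (herm (V v b) a) = v \<bullet> X"
    by (simp add: herm_V_l Re_sum inner_vec_def Xk sum_distrib_left mult_ac)
  also have "\<dots> = N" using Npos XX by (simp add: v_def power2_eq_square)
  finally have ReV: "2 * Re (herm (V v b) a) = N" .
  have c1: "herm a (V v b) = cnj (herm (V v b) a)" by (simp add: herm_cnj)
  have "Re (herm (a - V v b) (a - V v b)) = Re (herm a a) + Re (herm b b) - 2 * Re (herm (V v b) a)"
    by (simp add: herm_diff_l herm_diff_r herm_VV vv c1)
  also have "\<dots> = 0" using ReV by (simp add: N_def Nf_eq p)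
  finally have "a - V v b = 0" by (rule herm_self_0)
  then have aV: "a = V v b" by simp
  define y where "y = (\<chi> k. Re (\<i> * herm (E k *v b) b))"
  have Rvy: "Re (\<i> * herm (V v b) b) = v \<bullet> y"
    by (simp add: herm_V_l Re_sum inner_vec_def y_def sum_distrib_left mult_ac)
  have Yk: "Yf E \<phi> $ k = ((-2) *\<^sub>R y + (2 * (v \<bullet> y)) *\<^sub>R v) $ k" for k
  proof -
    have "herm (E k *v V v b) (V v b) = - herm (V v (E k *v V v b)) b" by (rule herm_r_V)
    also have "\<dots> = - herm (E k *v b) b + 2 * complex_of_real (v$k) * herm (V v b) b"
      by (simp add: V_E V_sq vv herm_diff_l herm_neg_l herm_sm_l mv_neg)
    finally have h: "herm (E k *v a) a = - herm (E k *v b) b + 2 * complex_of_real (v$k) * herm (V v b) b"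
      by (simp add: aV)
    have "Yf E \<phi> $ k = Re (\<i> * herm (E k *v a) a) - Re (\<i> * herm (E k *v b) b)"
      by (simp add: Yf_eq p)
    also have "\<dots> = -2 * Re (\<i> * herm (E k *v b) b) + 2 * v$k * Re (\<i> * herm (V v b) b)"
      unfolding h by (simp add: algebra_simps)
    finally show ?thesis unfolding Rvy by (simp add: y_def)
  qed
  have om: "omega E \<phi> i j = -2 * (v$i * y$j - v$j * y$i)" for i j
  proof -
    have h1: "herm (E i *v (E j *v b)) a = - herm (V v (E i *v (E j *v b))) b"
      unfolding aV by (rule herm_r_V)
    have "E i *v (E j *v a) = V v (E i *v (E j *v b)) + (2 * complex_of_real (v$i)) *s (E j *v b)
    - (2 * complex_of_real (v$j)) *s (E i *v b)"
      unfolding aV by (rule K1)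
    then have h2: "herm (E i *v (E j *v a)) b = herm (V v (E i *v (E j *v b))) b
      + (2 * complex_of_real (v$i)) * herm (E j *v b) b - (2 * complex_of_real (v$j)) * herm (E i *v b) b"
      by (simp only: herm_add_l herm_diff_l herm_sm_l)
    have "herm (E i *v (E j *v b)) a + herm (E i *v (E j *v a)) b
        = 2 * complex_of_real (v$i) * herm (E j *v b) b - 2 * complex_of_real (v$j) * herm (E i *v b) b"
      unfolding h1 h2 by simp
    then have "Im (herm (E i *v (E j *v b)) a + herm (E i *v (E j *v a)) b)
        = Im (2 * complex_of_real (v$i) * herm (E j *v b) b - 2 * complex_of_real (v$j) * herm (E i *v b) b)"
      by (rule arg_cong)
    then show ?thesis by (simp add: om_eq p y_def algebra_simps)
  qed
  have Y: "Yf E \<phi> = (-2) *\<^sub>R y + (2 * (v \<bullet> y)) *\<^sub>R v" using Yk by (simp add: vec_eq_iff)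
  show ?thesis
    using caseA[OF vv Xv Y, of "omega E \<phi>"] om by (simp add: N_def X_def)
qed

lemma caseY: assumes NY: "Nf \<phi> = norm (Yf E \<phi>)" and N0: "Nf \<phi> \<noteq> 0" shows "conclS \<phi>"
proof -
  obtain a b where p: "\<phi> = (a, b)" by (cases \<phi>)
  define N where "N = Nf \<phi>"
  define X where "X = Xf E \<phi>"
  define Y where "Y = Yf E \<phi>"
  define v where "v = (1/N) *\<^sub>R Y"
  have Npos: "N > 0" using NY N0 norm_ge_zero[of Y] unfolding N_def Y_def by linarith
  have Yv: "Y = N *\<^sub>R v" using Npos by (simp add: v_def)
  have YY: "Y \<bullet> Y = N^2" using NY by (simp add: N_def Y_def power2_norm_eq_inner[symmetric])
  have vv: "v \<bullet> v = 1" using Npos YY by (simp add: v_def power2_eq_square)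
  have "v \<bullet> Y = N" using Npos YY by (simp add: v_def power2_eq_square)
  moreover have "v \<bullet> Y = Re (\<i> * herm (V v a) a) - Re (\<i> * herm (V v b) b)"
  proof -
    have r: "Re (\<i> * herm (V v u) u) = (\<Sum>k\<in>UNIV. v$k * Re (\<i> * herm (E k *v u) u))" for u
      by (simp add: herm_V_l Re_sum sum_distrib_left mult_ac)
    show ?thesis unfolding r
      by (simp add: Y_def Yf_eq p inner_vec_def right_diff_distrib sum_subtractf sum_negf)
  qed
  ultimately have S: "Re (\<i> * herm (V v a) a) - Re (\<i> * herm (V v b) b) = N" by simp
  have ca: "herm a (V v a) = cnj (herm (V v a) a)" by (simp add: herm_cnj)
  have cb: "herm b (V v b) = cnj (herm (V v b) b)" by (simp add: herm_cnj)
  have P1: "Re (herm (V v a + \<i> *s a) (V v a + \<i> *s a)) = 2 * Re (herm a a) - 2 * Re (\<i> * herm (V v a) a)"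
    by (simp add: herm_add_l herm_add_r herm_sm_l herm_sm_r herm_VV vv ca)
  have P2: "Re (herm (V v b - \<i> *s b) (V v b - \<i> *s b)) = 2 * Re (herm b b) + 2 * Re (\<i> * herm (V v b) b)"
    by (simp add: herm_diff_l herm_diff_r herm_sm_l herm_sm_r herm_VV vv cb)
  have Nab: "N = Re (herm a a) + Re (herm b b)" by (simp add: N_def Nf_eq p)
  have "Re (herm (V v a + \<i> *s a) (V v a + \<i> *s a)) + Re (herm (V v b - \<i> *s b) (V v b - \<i> *s b)) = 0"
    unfolding P1 P2 using S Nab by linarith
  then have z1: "Re (herm (V v a + \<i> *s a) (V v a + \<i> *s a)) = 0" and z2: "Re (herm (V v b - \<i> *s b) (V v b - \<i> *s b)) = 0"
    using herm_self_ge[of "V v a + \<i> *s a"] herm_self_ge[of "V v b - \<i> *s b"] by linarith+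
  have "V v a + \<i> *s a = 0" using z1 by (rule herm_self_0)
  moreover have "V v b - \<i> *s b = 0" using z2 by (rule herm_self_0)
  ultimately have Va: "V v a = (- \<i>) *s a" and Vb: "V v b = \<i> *s b"
    by (simp_all add: vec_eq_iff algebra_simps add_eq_0_iff2)
  have Xk: "X$k = Re (herm (E k *v b) a) - Re (herm (E k *v a) b)" for k
    by (simp add: X_def Xf_eq p)
  have "X \<bullet> v = Re (herm (V v b) a) - Re (herm (V v a) b)"
    by (simp add: Xk herm_V_l Re_sum inner_vec_def sum_subtractf algebra_simps)
  also have "\<dots> = 0"
  proof -
    have "herm a b = cnj (herm b a)" by (simp add: herm_cnj)
    then show ?thesis by (simp add: Va Vb herm_sm_l herm_neg_l)
  qed
  finally have Xv: "X \<bullet> v = 0" .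
  have om: "omega E \<phi> i j = - (v$i * X$j - v$j * X$i)" for i j
  proof -
    define z where "z = herm (E i *v (E j *v b)) a"
    define w where "w = herm (E i *v (E j *v a)) b"
    have "E i *v (E j *v V v b) = V v (E i *v (E j *v b)) + (2 * complex_of_real (v$i)) *s (E j *v b)
      - (2 * complex_of_real (v$j)) *s (E i *v b)" by (rule K1)
    then have "\<i> *s (E i *v (E j *v b)) = V v (E i *v (E j *v b)) + (2 * complex_of_real (v$i)) *s (E j *v b)
      - (2 * complex_of_real (v$j)) *s (E i *v b)" by (simp only: Vb mv_smult)
    then have "herm (\<i> *s (E i *v (E j *v b))) a = herm (V v (E i *v (E j *v b)) + (2 * complex_of_real (v$i)) *s (E j *v b)
      - (2 * complex_of_real (v$j)) *s (E i *v b)) a" by (rule arg_cong)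
    then have "\<i> * z = herm (V v (E i *v (E j *v b))) a + 2 * complex_of_real (v$i) * herm (E j *v b) a
      - 2 * complex_of_real (v$j) * herm (E i *v b) a" by (simp only: herm_add_l herm_diff_l herm_sm_l z_def)
    moreover have "herm (V v (E i *v (E j *v b))) a = - \<i> * z"
      by (simp add: V_skew Va herm_sm_r herm_neg_r z_def)
    ultimately have "\<i> * z = - \<i> * z + (2 * complex_of_real (v$i) * herm (E j *v b) a
      - 2 * complex_of_real (v$j) * herm (E i *v b) a)" by simp
    then have zz: "z = - \<i> * (2 * complex_of_real (v$i) * herm (E j *v b) a
      - 2 * complex_of_real (v$j) * herm (E i *v b) a) / 2" by (rule solve1)
    have "E i *v (E j *v V v a) = V v (E i *v (E j *v a)) + (2 * complex_of_real (v$i)) *s (E j *v a)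
      - (2 * complex_of_real (v$j)) *s (E i *v a)" by (rule K1)
    then have "(- \<i>) *s (E i *v (E j *v a)) = V v (E i *v (E j *v a)) + (2 * complex_of_real (v$i)) *s (E j *v a)
      - (2 * complex_of_real (v$j)) *s (E i *v a)" by (simp only: Va mv_smult)
    then have "herm ((- \<i>) *s (E i *v (E j *v a))) b = herm (V v (E i *v (E j *v a)) + (2 * complex_of_real (v$i)) *s (E j *v a)
      - (2 * complex_of_real (v$j)) *s (E i *v a)) b" by (rule arg_cong)
    then have "- \<i> * w = herm (V v (E i *v (E j *v a))) b + 2 * complex_of_real (v$i) * herm (E j *v a) b
      - 2 * complex_of_real (v$j) * herm (E i *v a) b" by (simp only: herm_add_l herm_diff_l herm_sm_l w_def)
    moreover have "herm (V v (E i *v (E j *v a))) b = \<i> * w"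
      by (simp add: V_skew Vb herm_sm_r herm_neg_r w_def)
    ultimately have "- \<i> * w = \<i> * w + (2 * complex_of_real (v$i) * herm (E j *v a) b
      - 2 * complex_of_real (v$j) * herm (E i *v a) b)" by simp
    then have ww: "w = \<i> * (2 * complex_of_real (v$i) * herm (E j *v a) b
      - 2 * complex_of_real (v$j) * herm (E i *v a) b) / 2" by (rule solve2)
    have "omega E \<phi> i j = Im (z + w)" by (simp add: om_eq p z_def w_def)
    also have "\<dots> = - (v$i * X$j - v$j * X$i)"
      unfolding zz ww Xk by (simp add: field_simps)
    finally show ?thesis .
  qed
  show ?thesis
    using caseB[OF vv Yv Xv, of "omega E \<phi>"] om by (simp add: N_def X_def Y_def)
qed

end

lemma spin_of: assumes "spinor_module E" shows "spin E"
proof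
  fix i j u
  have "E i *v (E j *v u) + E j *v (E i *v u) = (E i ** E j + E j ** E i) *v u"
    by (simp add: matrix_vector_mul_assoc mv_addm)
  also have "\<dots> = (if i = j then -2 else 0) *s u"
    using assms by (simp add: spinor_module_def mv_mat)
  finally show "E i *v (E j *v u) + E j *v (E i *v u) = (if i = j then -2 else 0) *s u" .
next
  fix i u w
  show "herm (E i *v u) w = - herm u (E i *v w)"
    using assms by (simp add: spinor_module_def)
qed

theorem mainTheorem8:
  fixes E :: "'n::finite \<Rightarrow> complex^'m::finite^'m" and \<phi> :: "'m sbar"
  assumes "spinor_module E"
    and "Nf \<phi> = norm (Xf E \<phi>) \<or> Nf \<phi> = norm (Yf E \<phi>)"
  shows "(\<forall>i j. Nf \<phi> * omega E \<phi> i j = wedge (Xf E \<phi>) (Yf E \<phi>) i j)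
    \<and> Xf E \<phi> \<bullet> Yf E \<phi> = 0
    \<and> (Nf \<phi>)^2 - (norm (Xf E \<phi>))^2 - (norm (Yf E \<phi>))^2 + 1/2 * form_norm2 (omega E \<phi>) = 0"
proof -
  interpret spin E using spin_of[OF assms(1)] .
  show ?thesis
  proof (cases "Nf \<phi> = 0")
    case True
    then show ?thesis by (rule zero_case)
  next
    case False
    show ?thesis using assms(2)
    proof
      assume "Nf \<phi> = norm (Xf E \<phi>)"
      then show ?thesis using False by (rule caseX)
    next
      assume "Nf \<phi> = norm (Yf E \<phi>)"
      then show ?thesis using False by (rule caseY)
    qed
  qed
qed

end
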